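(* Fix $n\in\mathbb{N}$ and $s\in(0,1)$. Suppose that for every $i>2$ the jump kernels satisfy $\lambda_i|x-y|^{-1-2s}\le j_i^{(n)}(x,y)\le\Lambda_i|x-y|^{-1-2s}$ for all $n\ge0$ and all wires $\{x,y\}\in W_i^{(n)}$, with $0<\lambda_i\le\Lambda_i<\infty$, $\lim_{i\to\infty}\lambda_i/i^2=1$ and $\lim_{i\to\infty}\Lambda_i/i^2=1$. If $u$ is a continuous real function on $\overline{V}_{i_0}^*$ for some $i_0>2$, then $$\lim_{i\to\infty}\mathcal{E}_i^{(n)}(u|_{V_i^{(n)}})=2|u(0)-u(1)|^2.$$
   Context: Index graph: vertices $\mathbb{N}$; vertex $i$ has edges $e_{i,2i-2}$ to $2i-2$ (only if $i\ge2$), $e_{i,2i-1},e'_{i,2i-1}$ to $2i-1$, $e_{i,2i}$ to $2i$, weights $r_e>0$ with $r_{e_{i,2i-1}}=r_{e'_{i,2i-1}}$. For $e$ from $i$ to $j$, $\phi_e(x)=\frac{j}{2i}x+s_e$, $s_e=0$ for $e\in\{e_{i,2i-1},e_{i,2i}\}$, $s_e=\frac1{2i}$ for $e\in\{e_{i,2i-2},e'_{i,2i-1}\}$. $E_i^{(n)}$: paths $\sigma=e_1\cdots e_n$ of length $n$ from $i$; $\phi_\sigma=\phi_{e_1}\circ\cdots\circ\phi_{e_n}$, $\delta_\sigma=r_{e_1}\cdots r_{e_n}$. For $i>1$: $V_{i-}^{(n)}=\{k/(i2^n)\}_{k=0}^{2^n-1}$, $V_{i+}^{(n)}=\{1-k/(i2^n)\}_{k=0}^{2^n-1}$,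 $V_i^{(n)}=V_{i-}^{(n)}\cup V_{i+}^{(n)}$, $\overline{V}_i^*=[0,\frac1i]\cup[1-\frac1i,1]$ (so $V_i^{(n)}\subset\overline{V}_{i_0}^*$ for $i\ge i_0$). Wires $W_i^{(n)}=\{\{\phi_\sigma(0),\phi_\sigma(1)\}:\sigma\in E_i^{(n)}\}$ are all pairs $\{x,y\}$ with $x\in V_{i-}^{(n)},y\in V_{i+}^{(n)}$, each with a unique path $\sigma^{(n)}_{x,y}$. $\mu_i^{(n)}(x)=\frac1{i2^n}$. Kernel $j_i^{(n)}(x,y)=(\delta_{\sigma^{(n)}_{x,y}}\mu_i^{(n)}(x)\mu_i^{(n)}(y))^{-1}$ on wires, $0$ otherwise. $\mathcal{E}_i^{(n)}(v)=\sum_{x,y\in V_i^{(n)}}(v(x)-v(y))^2j_i^{(n)}(x,y)\mu_i^{(n)}(x)\mu_i^{(n)}(y)$ for $v:V_i^{(n)}\to\mathbb{R}$. *)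

theory Defs
  imports Complex_Main
begin

text \<open>Edges out of vertex i of the index graph, by kind:
  EL = e_{i,2i-2} (only if i >= 2), EM = e_{i,2i-1}, EM' = e'_{i,2i-1}, ER = e_{i,2i}.
  An edge is the pair (source vertex, kind).\<close>
datatype ekind = EL | EM | EM' | ER

fun etarget :: "nat \<Rightarrow> ekind \<Rightarrow> nat" where
  "etarget i EL = 2*i - 2"
| "etarget i EM = 2*i - 1"
| "etarget i EM' = 2*i - 1"
| "etarget i ER = 2*i"

fun eshift :: "nat \<Rightarrow> ekind \<Rightarrow> real" where
  "eshift i EL = 1 / (2 * real i)"
| "eshift i EM = 0"
| "eshift i EM' = 1 / (2 * real i)"
| "eshift i ER = 0"

definition ephi :: "nat \<Rightarrow> ekind \<Rightarrow> real \<Rightarrow> real" where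
  "ephi i k x = real (etarget i k) / (2 * real i) * x + eshift i k"

fun valid_path :: "nat \<Rightarrow> ekind list \<Rightarrow> bool" where
  "valid_path i [] = True"
| "valid_path i (k # ks) = ((k = EL \<longrightarrow> i \<ge> 2) \<and> valid_path (etarget i k) ks)"

definition paths :: "nat \<Rightarrow> nat \<Rightarrow> ekind list set" where
  "paths i n = {\<sigma>. valid_path i \<sigma> \<and> length \<sigma> = n}"

fun path_phi :: "nat \<Rightarrow> ekind list \<Rightarrow> real \<Rightarrow> real" where
  "path_phi i [] x = x"
| "path_phi i (k # ks) x = ephi i k (path_phi (etarget i k) ks x)"

fun path_delta :: "(nat \<Rightarrow> ekind \<Rightarrow> real) \<Rightarrow> nat \<Rightarrow> ekind list \<Rightarrow> real" where
  "path_delta r i [] = 1"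
| "path_delta r i (k # ks) = r i k * path_delta r (etarget i k) ks"

definition admissible_weights :: "(nat \<Rightarrow> ekind \<Rightarrow> real) \<Rightarrow> bool" where
  "admissible_weights r \<longleftrightarrow> (\<forall>i k. r i k > 0) \<and> (\<forall>i. r i EM = r i EM')"

definition Vminus :: "nat \<Rightarrow> nat \<Rightarrow> real set" where
  "Vminus i n = {real k / (real i * 2 ^ n) | k. k < 2 ^ n}"

definition Vplus :: "nat \<Rightarrow> nat \<Rightarrow> real set" where
  "Vplus i n = {1 - real k / (real i * 2 ^ n) | k. k < 2 ^ n}"

definition V :: "nat \<Rightarrow> nat \<Rightarrow> real set" where
  "V i n = Vminus i n \<union> Vplus i n"

definition Vbar :: "nat \<Rightarrow> real set" where
  "Vbar i = {0 .. 1 / real i} \<union> {1 - 1 / real i .. 1}"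

definition wires :: "nat \<Rightarrow> nat \<Rightarrow> real set set" where
  "wires i n = {{path_phi i \<sigma> 0, path_phi i \<sigma> 1} | \<sigma>. \<sigma> \<in> paths i n}"

definition wire_path :: "nat \<Rightarrow> nat \<Rightarrow> real \<Rightarrow> real \<Rightarrow> ekind list" where
  "wire_path i n x y = (THE \<sigma>. \<sigma> \<in> paths i n \<and> {path_phi i \<sigma> 0, path_phi i \<sigma> 1} = {x, y})"

definition mu :: "nat \<Rightarrow> nat \<Rightarrow> real" where
  "mu i n = 1 / (real i * 2 ^ n)"

definition jker :: "(nat \<Rightarrow> ekind \<Rightarrow> real) \<Rightarrow> nat \<Rightarrow> nat \<Rightarrow> real \<Rightarrow> real \<Rightarrow> real" where
  "jker r i n x y = (if {x, y} \<in> wires i n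
      then 1 / (path_delta r i (wire_path i n x y) * mu i n * mu i n) else 0)"

definition energy :: "(nat \<Rightarrow> ekind \<Rightarrow> real) \<Rightarrow> nat \<Rightarrow> nat \<Rightarrow> (real \<Rightarrow> real) \<Rightarrow> real" where
  "energy r i n v = (\<Sum>x\<in>V i n. \<Sum>y\<in>V i n. (v x - v y)^2 * jker r i n x y * mu i n * mu i n)"

end

theory Submission
  imports Defs
begin

lemma phi_form:
  assumes "valid_path i \<sigma>" "i \<ge> 2"
  shows "\<exists>a<(2::nat)^length \<sigma>. \<exists>b<(2::nat)^length \<sigma>. path_phi i \<sigma> 0 = real a/(real i*2^length \<sigma>) \<and> path_phi i \<sigma> 1 = 1 - real b/(real i*2^length \<sigma>)"
  using assms
proof (induction \<sigma> arbitrary: i)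
  case Nil then show ?case by auto
next
  case (Cons k ks)
  let ?j = "etarget i k"
  let ?m = "length ks"
  have j: "?j \<ge> 2" using Cons.prems by (cases k) auto
  have vp: "valid_path ?j ks" using Cons.prems by (cases k) auto
  from Cons.IH[OF vp j] obtain a b where ab: "a < 2^?m" "b < 2^?m"
    "path_phi ?j ks 0 = real a/(real ?j*2^?m)" "path_phi ?j ks 1 = 1 - real b/(real ?j * 2^?m)" by blast
  have i: "real i \<ge> 2" using Cons.prems by simp
  have p: "(2::real)^?m > 0" by simp
  have jr: "real ?j > 0" using j by simp
  have e0: "path_phi i (k#ks) 0 = real a/(real i*2^Suc ?m) + eshift i k"
    using jr i p by (simp add: ephi_def ab(3) field_simps)
  have e1: "path_phi i (k#ks) 1 = real ?j/(2*real i) + eshift i k - real b/(real i*2^Suc ?m)"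
    using jr i p by (simp add: ephi_def ab(4) field_simps)
  show ?case
  proof (cases k)
    case EL
    have rj: "real ?j = 2 * real i - 2" using Cons.prems EL by (simp add: of_nat_diff)
    show ?thesis
      apply (rule exI[of _ "a + 2^?m"], rule conjI, insert ab(1,2), simp add: EL)
      apply (rule exI[of _ "b + 2^?m"], rule conjI, insert ab(1,2), simp add: EL)
      unfolding e0 e1 rj using i p unfolding EL by (simp add: field_simps)
  next
    case EM
    have rj: "real ?j = 2 * real i - 1" using Cons.prems EM by (simp add: of_nat_diff)
    show ?thesis
      apply (rule exI[of _ "a"], rule conjI, insert ab(1,2), simp add: EM)
      apply (rule exI[of _ "b + 2^?m"], rule conjI, insert ab(1,2), simp add: EM)
      unfolding e0 e1 rj using i p unfolding EM by (simp add: field_simps)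
  next
    case EM'
    have rj: "real ?j = 2 * real i - 1" using Cons.prems EM' by (simp add: of_nat_diff)
    show ?thesis
      apply (rule exI[of _ "a + 2^?m"], rule conjI, insert ab(1,2), simp add: EM')
      apply (rule exI[of _ "b"], rule conjI, insert ab(1,2), simp add: EM')
      unfolding e0 e1 rj using i p unfolding EM' by (simp add: field_simps)
  next
    case ER
    have rj: "real ?j = 2 * real i" using Cons.prems ER by (simp add: of_nat_diff)
    show ?thesis
      apply (rule exI[of _ "a"], rule conjI, insert ab(1,2), simp add: ER)
      apply (rule exI[of _ "b"], rule conjI, insert ab(1,2), simp add: ER)
      unfolding e0 e1 rj using i p unfolding ER by (simp add: field_simps)
  qed
qed

lemma phi_surj:
  "i \<ge> 2 \<Longrightarrow> a < 2^m \<Longrightarrow> b < 2^m \<Longrightarrow> \<exists>\<sigma>. valid_path i \<sigma> \<and> length \<sigma> = m \<and>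
    path_phi i \<sigma> 0 = real a/(real i*2^m) \<and> path_phi i \<sigma> 1 = 1 - real b/(real i*2^m)"
proof (induction m arbitrary: i a b)
  case 0 then show ?case by (intro exI[of _ "[]"]) auto
next
  case (Suc m)
  have i: "real i \<ge> 2" using Suc.prems by simp
  have p: "(2::real)^m > 0" by simp
  consider "a \<ge> 2^m" "b \<ge> 2^m" | "a < 2^m" "b \<ge> 2^m" | "a \<ge> 2^m" "b < 2^m" | "a < 2^m" "b < 2^m" by linarith
  then show ?case
  proof cases
    case 1
    have j: "etarget i EL \<ge> 2" "real (etarget i EL) = 2 * real i - 2" using Suc.prems by (auto simp: of_nat_diff)
    obtain ks where ks: "valid_path (etarget i EL) ks" "length ks = m"
      "path_phi (etarget i EL) ks 0 = real (a - 2^m)/(real (etarget i EL)*2^m)"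
      "path_phi (etarget i EL) ks 1 = 1 - real (b - 2^m)/(real (etarget i EL)*2^m)"
      using Suc.IH[OF j(1), of "a - 2^m" "b - 2^m"] Suc.prems 1 by (metis (no_types, lifting) add_diff_inverse_nat less_diff_conv2 mult_2 not_less power_Suc)
    show ?thesis
      apply (rule exI[of _ "EL # ks"])
      apply (simp only: path_phi.simps ks(3) ks(4))
      using ks j i p 1 Suc.prems by (simp add: ephi_def field_simps of_nat_diff)
  next
    case 2
    have j: "etarget i EM \<ge> 2" "real (etarget i EM) = 2 * real i - 1" using Suc.prems by (auto simp: of_nat_diff)
    obtain ks where ks: "valid_path (etarget i EM) ks" "length ks = m"
      "path_phi (etarget i EM) ks 0 = real a/(real (etarget i EM)*2^m)"
      "path_phi (etarget i EM) ks 1 = 1 - real (b - 2^m)/(real (etarget i EM)*2^m)"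
      using Suc.IH[OF j(1), of "a" "b - 2^m"] Suc.prems 2 by (metis (no_types, lifting) add_diff_inverse_nat less_diff_conv2 mult_2 not_less power_Suc)
    show ?thesis
      apply (rule exI[of _ "EM # ks"])
      apply (simp only: path_phi.simps ks(3) ks(4))
      using ks j i p 2 Suc.prems by (simp add: ephi_def field_simps of_nat_diff)
  next
    case 3
    have j: "etarget i EM' \<ge> 2" "real (etarget i EM') = 2 * real i - 1" using Suc.prems by (auto simp: of_nat_diff)
    obtain ks where ks: "valid_path (etarget i EM') ks" "length ks = m"
      "path_phi (etarget i EM') ks 0 = real (a - 2^m)/(real (etarget i EM')*2^m)"
      "path_phi (etarget i EM') ks 1 = 1 - real b/(real (etarget i EM')*2^m)"
      using Suc.IH[OF j(1), of "a - 2^m" "b"] Suc.prems 3 by (metis (no_types, lifting) add_diff_inverse_nat less_diff_conv2 mult_2 not_less power_Suc)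
    show ?thesis
      apply (rule exI[of _ "EM' # ks"])
      apply (simp only: path_phi.simps ks(3) ks(4))
      using ks j i p 3 Suc.prems by (simp add: ephi_def field_simps of_nat_diff)
  next
    case 4
    have j: "etarget i ER \<ge> 2" "real (etarget i ER) = 2 * real i" using Suc.prems by (auto simp: of_nat_diff)
    obtain ks where ks: "valid_path (etarget i ER) ks" "length ks = m"
      "path_phi (etarget i ER) ks 0 = real a/(real (etarget i ER)*2^m)"
      "path_phi (etarget i ER) ks 1 = 1 - real b/(real (etarget i ER)*2^m)"
      using Suc.IH[OF j(1), of "a" "b"] Suc.prems 4 by (metis (no_types, lifting) add_diff_inverse_nat less_diff_conv2 mult_2 not_less power_Suc)
    show ?thesis
      apply (rule exI[of _ "ER # ks"])
      apply (simp only: path_phi.simps ks(3) ks(4))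
      using ks j i p 4 Suc.prems by (simp add: ephi_def field_simps of_nat_diff)
  qed
qed

definition xm :: "nat \<Rightarrow> nat \<Rightarrow> nat \<Rightarrow> real" where "xm i n a = real a/(real i*2^n)"
definition yp :: "nat \<Rightarrow> nat \<Rightarrow> nat \<Rightarrow> real" where "yp i n b = 1 - real b/(real i*2^n)"

lemma xm_bounds: "i > 0 \<Longrightarrow> a < 2^n \<Longrightarrow> 0 \<le> xm i n a \<and> xm i n a < 1/real i"
proof -
  assume "i > 0" "a < 2^n"
  then have "real a < 2^n" by (metis of_nat_less_iff of_nat_numeral of_nat_power)
  then show ?thesis using \<open>i>0\<close> by (simp add: xm_def field_simps)
qed

lemma yp_bounds: "i > 0 \<Longrightarrow> b < 2^n \<Longrightarrow> 1 - 1/real i < yp i n b \<and> yp i n b \<le> 1"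
  using xm_bounds[of i b n] by (simp add: yp_def xm_def)

lemma xm_ne_yp: "i > 2 \<Longrightarrow> a < 2^n \<Longrightarrow> b < 2^n \<Longrightarrow> xm i n a \<noteq> yp i n b"
proof -
  assume h: "i > 2" "a < 2^n" "b < 2^n"
  have "1/real i < 1 - 1/real i" using h(1) by (simp add: field_simps)
  moreover have "xm i n a < 1/real i" using xm_bounds[of i a n] h by auto
  moreover have "1 - 1/real i < yp i n b" using yp_bounds[of i b n] h by auto
  ultimately show ?thesis by linarith
qed

lemma Vminus_eq: "Vminus i n = xm i n ` {..<2^n}"
  unfolding Vminus_def xm_def by auto
lemma Vplus_eq: "Vplus i n = yp i n ` {..<2^n}"
  unfolding Vplus_def yp_def by auto

lemma inj_xm: "i > 0 \<Longrightarrow> inj_on (xm i n) A"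
  by (auto simp: inj_on_def xm_def)
lemma inj_yp: "i > 0 \<Longrightarrow> inj_on (yp i n) A"
  by (auto simp: inj_on_def yp_def)

lemma wires_char: "i \<ge> 2 \<Longrightarrow> ({x,y} \<in> wires i n) \<longleftrightarrow> (\<exists>a<2^n. \<exists>b<2^n. {x,y} = {xm i n a, yp i n b})"
proof
  assume i: "i \<ge> 2" and "{x,y} \<in> wires i n"
  then obtain \<sigma> where s: "valid_path i \<sigma>" "length \<sigma> = n" "{x,y} = {path_phi i \<sigma> 0, path_phi i \<sigma> 1}"
    unfolding wires_def paths_def by auto
  from phi_form[OF s(1) i] s show "\<exists>a<2^n. \<exists>b<2^n. {x,y} = {xm i n a, yp i n b}"
    unfolding xm_def yp_def by metis
next
  assume i: "i \<ge> 2" and "\<exists>a<2^n. \<exists>b<2^n. {x,y} = {xm i n a, yp i n b}"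
  then obtain a b where ab: "a < 2^n" "b < 2^n" "{x,y} = {xm i n a, yp i n b}" by auto
  from phi_surj[OF i ab(1,2)] obtain \<sigma> where "valid_path i \<sigma>" "length \<sigma> = n"
    "path_phi i \<sigma> 0 = xm i n a" "path_phi i \<sigma> 1 = yp i n b" by (auto simp: xm_def yp_def)
  then show "{x,y} \<in> wires i n" unfolding wires_def paths_def using ab(3) by (metis (mono_tags, lifting) mem_Collect_eq)
qed

lemma jker_sym: "jker r i n x y = jker r i n y x"
  unfolding jker_def wire_path_def by (simp add: insert_commute)

lemma energy_eq:
  assumes i: "i > 2"
  shows "energy r i n u = 2 * (\<Sum>a<2^n. \<Sum>b<2^n. (u (xm i n a) - u (yp i n b))^2 * jker r i n (xm i n a) (yp i n b) * mu i n * mu i n)"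
proof -
  define g where "g x y = (u x - u y)^2 * jker r i n x y * mu i n * mu i n" for x y
  have gs: "g x y = g y x" for x y unfolding g_def by (simp add: jker_sym power2_commute)
  let ?Vm = "Vminus i n" and ?Vp = "Vplus i n"
  have fin: "finite ?Vm" "finite ?Vp" by (auto simp: Vminus_eq Vplus_eq)
  have dis: "?Vm \<inter> ?Vp = {}" using xm_ne_yp[OF i] by (auto simp: Vminus_eq Vplus_eq)
  have nw: "{x,y} \<notin> wires i n" if "x \<in> ?Vm" "y \<in> ?Vm" for x y
  proof
    assume "{x,y} \<in> wires i n"
    then obtain a b where ab: "a < 2^n" "b<2^n" "{x,y} = {xm i n a, yp i n b}" using wires_char[of i x y n] i by auto
    then have "yp i n b \<in> ?Vm" using that by auto
    then show False using dis ab(2) by (auto simp: Vplus_eq)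
  qed
  have nw2: "{x,y} \<notin> wires i n" if "x \<in> ?Vp" "y \<in> ?Vp" for x y
  proof
    assume "{x,y} \<in> wires i n"
    then obtain a b where ab: "a < 2^n" "b<2^n" "{x,y} = {xm i n a, yp i n b}" using wires_char[of i x y n] i by auto
    then have "xm i n a \<in> ?Vp" using that by auto
    then show False using dis ab(1) by (auto simp: Vminus_eq)
  qed
  have z1: "(\<Sum>x\<in>?Vm. \<Sum>y\<in>?Vm. g x y) = 0"
    by (rule sum.neutral, rule ballI, rule sum.neutral) (auto simp: g_def jker_def nw)
  have z2: "(\<Sum>x\<in>?Vp. \<Sum>y\<in>?Vp. g x y) = 0"
    by (rule sum.neutral, rule ballI, rule sum.neutral) (auto simp: g_def jker_def nw2)
  have "energy r i n u = (\<Sum>x\<in>?Vm \<union> ?Vp. \<Sum>y\<in>?Vm \<union> ?Vp. g x y)"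
    unfolding energy_def V_def g_def by simp
  also have "\<dots> = (\<Sum>x\<in>?Vm. \<Sum>y\<in>?Vm. g x y) + (\<Sum>x\<in>?Vm. \<Sum>y\<in>?Vp. g x y)
      + ((\<Sum>x\<in>?Vp. \<Sum>y\<in>?Vm. g x y) + (\<Sum>x\<in>?Vp. \<Sum>y\<in>?Vp. g x y))"
    by (simp add: sum.union_disjoint[OF fin dis] sum.distrib)
  also have "(\<Sum>x\<in>?Vp. \<Sum>y\<in>?Vm. g x y) = (\<Sum>x\<in>?Vm. \<Sum>y\<in>?Vp. g x y)"
    by (subst sum.swap) (simp add: gs)
  also have "(\<Sum>x\<in>?Vm. \<Sum>y\<in>?Vp. g x y) = (\<Sum>a<2^n. \<Sum>b<2^n. g (xm i n a) (yp i n b))"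
    using i by (simp add: Vminus_eq Vplus_eq sum.reindex inj_xm inj_yp)
  finally show ?thesis using z1 z2 by (simp add: g_def)
qed

lemma xm_lim: "(\<lambda>i. xm i n a) \<longlonglongrightarrow> 0"
proof -
  have eq: "(\<lambda>i. xm i n a) = (\<lambda>i. (real a / 2^n) * inverse (real i))"
    by (auto simp: xm_def field_simps)
  show ?thesis unfolding eq by (rule tendsto_mult_right_zero[OF lim_inverse_n])
qed

lemma yp_lim: "(\<lambda>i. yp i n b) \<longlonglongrightarrow> 1"
proof -
  have "(\<lambda>i. 1 - xm i n b) \<longlonglongrightarrow> 1 - 0" by (intro tendsto_intros xm_lim)
  then show ?thesis by (simp add: yp_def xm_def)
qed

theorem lemma6p3:
  fixes r :: "nat \<Rightarrow> ekind \<Rightarrow> real" and n :: nat and s :: real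
    and lam Lam :: "nat \<Rightarrow> real" and u :: "real \<Rightarrow> real" and i0 :: nat
  assumes r: "admissible_weights r"
    and s: "0 < s" "s < 1"
    and lampos: "\<And>i. i > 2 \<Longrightarrow> 0 < lam i \<and> lam i \<le> Lam i"
    and bounds: "\<And>i m x y. i > 2 \<Longrightarrow> {x, y} \<in> wires i m \<Longrightarrow>
        lam i * \<bar>x - y\<bar> powr (-1 - 2*s) \<le> jker r i m x y \<and>
        jker r i m x y \<le> Lam i * \<bar>x - y\<bar> powr (-1 - 2*s)"
    and lamlim: "(\<lambda>i. lam i / real i ^ 2) \<longlonglongrightarrow> 1"
    and Lamlim: "(\<lambda>i. Lam i / real i ^ 2) \<longlonglongrightarrow> 1"
    and i0: "i0 > 2"
    and u: "continuous_on (Vbar i0) u"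
  shows "(\<lambda>i. energy r i n u) \<longlonglongrightarrow> 2 * (u 0 - u 1)^2"
proof -
  define c :: real where "c = 1 / (2^n * 2^n)"
  define h where "h i a b = (u (xm i n a) - u (yp i n b))^2 * (jker r i n (xm i n a) (yp i n b) * mu i n * mu i n)" for i a b
  have hlim: "(\<lambda>i. h i a b) \<longlonglongrightarrow> (u 0 - u 1)^2 * c" if ab: "a < 2^n" "b < 2^n" for a b
  proof -
    have ev0: "\<forall>\<^sub>F i in sequentially. i \<ge> i0" by (rule eventually_ge_at_top)
    have mem: "\<forall>\<^sub>F i in sequentially. xm i n a \<in> Vbar i0 \<and> yp i n b \<in> Vbar i0"
    proof (rule eventually_mono[OF ev0])
      fix i assume "i \<ge> i0"
      then have ip: "i > 0" using i0 by simp
      have "1/real i \<le> 1/real i0" using \<open>i \<ge> i0\<close> i0 by (simp add: frac_le)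
      then show "xm i n a \<in> Vbar i0 \<and> yp i n b \<in> Vbar i0"
        using xm_bounds[OF ip ab(1)] yp_bounds[OF ip ab(2)] unfolding Vbar_def by auto
    qed
    have u0: "(\<lambda>i. u (xm i n a)) \<longlonglongrightarrow> u 0"
      by (rule continuous_on_tendsto_compose[OF u xm_lim]) (auto simp: Vbar_def intro: eventually_mono[OF mem])
    have u1: "(\<lambda>i. u (yp i n b)) \<longlonglongrightarrow> u 1"
      using i0 by (intro continuous_on_tendsto_compose[OF u yp_lim]) (auto simp: Vbar_def intro: eventually_mono[OF mem])
    have d: "(\<lambda>i. \<bar>xm i n a - yp i n b\<bar>) \<longlonglongrightarrow> \<bar>0 - 1\<bar>"
      by (intro tendsto_intros xm_lim yp_lim)
    have pw: "(\<lambda>i. \<bar>xm i n a - yp i n b\<bar> powr (-1 - 2*s)) \<longlonglongrightarrow> 1"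
      using tendsto_powr[OF d tendsto_const, of "-1 - 2*s"] by simp
    define lo where "lo i = lam i / real i ^ 2 * \<bar>xm i n a - yp i n b\<bar> powr (-1 - 2*s) * c" for i
    define hi where "hi i = Lam i / real i ^ 2 * \<bar>xm i n a - yp i n b\<bar> powr (-1 - 2*s) * c" for i
    have lo: "lo \<longlonglongrightarrow> 1 * 1 * c" unfolding lo_def by (intro tendsto_intros lamlim pw)
    have hi: "hi \<longlonglongrightarrow> 1 * 1 * c" unfolding hi_def by (intro tendsto_intros Lamlim pw)
    have ev3: "\<forall>\<^sub>F i in sequentially. i > 2" by (rule eventually_gt_at_top)
    have sq: "\<forall>\<^sub>F i in sequentially. lo i \<le> jker r i n (xm i n a) (yp i n b) * mu i n * mu i n \<and>
       jker r i n (xm i n a) (yp i n b) * mu i n * mu i n \<le> hi i"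
    proof (rule eventually_mono[OF ev3])
      fix i :: nat assume i: "i > 2"
      have w: "{xm i n a, yp i n b} \<in> wires i n" using wires_char[of i "xm i n a" "yp i n b" n] i ab by auto
      have mm: "mu i n * mu i n = 1 / real i ^ 2 * c" unfolding mu_def c_def by (simp add: field_simps power2_eq_square)
      have mp: "mu i n * mu i n > 0" using i by (simp add: mu_def)
      from bounds[OF i w] have "lam i * \<bar>xm i n a - yp i n b\<bar> powr (-1 - 2*s) * (mu i n * mu i n) \<le> jker r i n (xm i n a) (yp i n b) * (mu i n * mu i n)
          \<and> jker r i n (xm i n a) (yp i n b) * (mu i n * mu i n) \<le> Lam i * \<bar>xm i n a - yp i n b\<bar> powr (-1 - 2*s) * (mu i n * mu i n)"
        using mp by (auto intro: mult_right_mono)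
      moreover have "jker r i n (xm i n a) (yp i n b) * mu i n * mu i n = jker r i n (xm i n a) (yp i n b) * (mu i n * mu i n)"
        by (simp add: mult.assoc)
      moreover have "lo i = lam i * \<bar>xm i n a - yp i n b\<bar> powr (-1 - 2*s) * (mu i n * mu i n)"
        unfolding lo_def mm by simp
      moreover have "hi i = Lam i * \<bar>xm i n a - yp i n b\<bar> powr (-1 - 2*s) * (mu i n * mu i n)"
        unfolding hi_def mm by simp
      ultimately show "lo i \<le> jker r i n (xm i n a) (yp i n b) * mu i n * mu i n \<and>
         jker r i n (xm i n a) (yp i n b) * mu i n * mu i n \<le> hi i"
        by simp
    qed
    have j: "(\<lambda>i. jker r i n (xm i n a) (yp i n b) * mu i n * mu i n) \<longlonglongrightarrow> c"
      using tendsto_sandwich[OF eventually_mono[OF sq] eventually_mono[OF sq] lo hi] by auto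
    show ?thesis unfolding h_def by (intro tendsto_intros u0 u1 j)
  qed
  have L: "(\<lambda>i. 2 * (\<Sum>a<2^n. \<Sum>b<2^n. h i a b)) \<longlonglongrightarrow> 2 * (\<Sum>a<(2::nat)^n. \<Sum>b<(2::nat)^n. (u 0 - u 1)^2 * c)"
    by (intro tendsto_intros hlim) auto
  have E: "(\<Sum>a<(2::nat)^n. \<Sum>b<(2::nat)^n. (u 0 - u 1)^2 * c) = (u 0 - u 1)^2"
    by (simp add: c_def)
  have L2: "(\<lambda>i. 2 * (\<Sum>a<2^n. \<Sum>b<2^n. h i a b)) \<longlonglongrightarrow> 2 * (u 0 - u 1)^2" using L unfolding E .
  have "\<forall>\<^sub>F i in sequentially. 2 * (\<Sum>a<2^n. \<Sum>b<2^n. h i a b) = energy r i n u"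
    by (rule eventually_mono[OF eventually_gt_at_top[of 2]]) (simp add: energy_eq h_def mult.assoc)
  from Lim_transform_eventually[OF L2 this] show ?thesis .
qed

end
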